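(* Let $q$ be a self-join-free Boolean conjunctive query and let $C$ be an elementary cycle in the M-graph of $q$ (identified with its set of atoms). Let $\mathbf{db}$ be a database and let $\mathcal{S}$ be a strong component of the $\hookrightarrow_C$-graph of $\mathbf{db}$. If some fact of $\mathcal{S}$ belongs to the maximal garbage set for $C$ in $\mathbf{db}$, then every fact of $\mathcal{S}$ belongs to the maximal garbage set for $C$ in $\mathbf{db}$.
   Context: Every relation name has a signature $[n,k]$ ($1\le k\le n$; primary-key positions $1,\dots,k$) and a mode in $\{\mathsf{c},\mathsf{i}\}$. For an atom $F$, $\mathrm{key}(F)$ = variables at primary-key positions, $\mathrm{vars}(F)$ = all its variables. Facts are variable-free atoms; key-equal facts share relation name and primary-key values. A database is a finite set of facts with no two distinct key-equal facts of mode $\mathsf{c}$, all of whose relation names occur in $q$; the block of $A$ is the set of facts of $\mathbf{db}$ key-equal to $A$; a repair is a maximal subset without two distinct key-equal facts. A self-join-free Boolean conjunctive query is a finite set of atoms with distinct relation names; $\mathrm{atom}(A)$ is the atom of $q$ with the relation name of fact $A$. $\mathcal{K}(p)=\{\mathrm{key}(F)\to\mathrm{vars}(F)\mid F\in p\}$; $q^{\mathsf{c}}$ = atoms of mode $\mathsf{c}$. M-graph of $q$: vertices atoms of $q$, edge $F\to G$ ($F\ne G$) iff $\mathcal{K}(q^{\mathsf{c}})\models\mathrm{vars}(F)\to\mathrm{key}(G)$. $\hookrightarrow$-graph: vertices facts of $\mathbf{db}$, edge $A\hookrightarrow B$ iff there are a valuation $\theta$ of the variables of $q$ and an M-graph edge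 $F\to G$ with $\theta(q)\subseteq\mathbf{db}$, $A=\theta(F)$, $B$ key-equal to $\theta(G)$. The $\hookrightarrow_C$-graph: vertices the facts $A$ with $\mathrm{atom}(A)$ in $C$, edge $A\hookrightarrow_C B$ iff $A\hookrightarrow B$ and $C$ has an edge from $\mathrm{atom}(A)$ to $\mathrm{atom}(B)$. A subset $\mathbf{o}\subseteq\mathbf{db}$ is a garbage set for $q_0\subseteq q$ in $\mathbf{db}$ if (1) for every $A\in\mathbf{o}$, $\mathrm{atom}(A)\in q_0$ and the block of $A$ is included in $\mathbf{o}$; and (2) there is a repair $\mathbf{r}$ of $\mathbf{o}$ such that for every valuation $\theta$ of the variables of $q$, if $\theta(q)\subseteq(\mathbf{db}\setminus\mathbf{o})\cup\mathbf{r}$ then $\theta(q_0)\cap\mathbf{r}=\emptyset$. Garbage sets are closed under union; the maximal garbage set is the largest one. *)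

theory Defs
  imports Main
begin

datatype mode = ModeC | ModeI

record 'r schema =
  arity :: "'r \<Rightarrow> nat"
  keylen :: "'r \<Rightarrow> nat"
  rmode :: "'r \<Rightarrow> mode"

definition wf_schema :: "'r schema \<Rightarrow> bool" where
  "wf_schema S \<longleftrightarrow> (\<forall>R. 1 \<le> keylen S R \<and> keylen S R \<le> arity S R)"

datatype ('v, 'c) trm = Var 'v | Cst 'c

type_synonym ('r, 'v, 'c) atom = "'r \<times> ('v, 'c) trm list"
type_synonym ('r, 'c) fact = "'r \<times> 'c list"

definition rel :: "'r \<times> 'a \<Rightarrow> 'r" where "rel F = fst F"

fun tvars :: "('v, 'c) trm \<Rightarrow> 'v set" where
  "tvars (Var v) = {v}" | "tvars (Cst c) = {}"

definition vars :: "('r, 'v, 'c) atom \<Rightarrow> 'v set" where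
  "vars F = \<Union> (tvars ` set (snd F))"

definition key :: "'r schema \<Rightarrow> ('r, 'v, 'c) atom \<Rightarrow> 'v set" where
  "key S F = \<Union> (tvars ` set (take (keylen S (fst F)) (snd F)))"

fun tval :: "('v \<Rightarrow> 'c) \<Rightarrow> ('v, 'c) trm \<Rightarrow> 'c" where
  "tval \<theta> (Var v) = \<theta> v" | "tval \<theta> (Cst c) = c"

definition inst :: "('v \<Rightarrow> 'c) \<Rightarrow> ('r, 'v, 'c) atom \<Rightarrow> ('r, 'c) fact" where
  "inst \<theta> F = (fst F, map (tval \<theta>) (snd F))"

definition key_equal :: "'r schema \<Rightarrow> ('r, 'c) fact \<Rightarrow> ('r, 'c) fact \<Rightarrow> bool" where
  "key_equal S A B \<longleftrightarrow> fst A = fst B \<and>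
     take (keylen S (fst A)) (snd A) = take (keylen S (fst B)) (snd B)"

definition sjf_query :: "'r schema \<Rightarrow> ('r, 'v, 'c) atom set \<Rightarrow> bool" where
  "sjf_query S q \<longleftrightarrow> finite q \<and>
     (\<forall>F\<in>q. length (snd F) = arity S (fst F)) \<and>
     (\<forall>F\<in>q. \<forall>G\<in>q. fst F = fst G \<longrightarrow> F = G)"

definition is_database :: "'r schema \<Rightarrow> ('r, 'v, 'c) atom set \<Rightarrow> ('r, 'c) fact set \<Rightarrow> bool" where
  "is_database S q db \<longleftrightarrow> finite db \<and>
     (\<forall>A\<in>db. length (snd A) = arity S (fst A)) \<and>
     (\<forall>A\<in>db. fst A \<in> fst ` q) \<and>
     (\<forall>A\<in>db. \<forall>B\<in>db. rmode S (fst A) = ModeC \<and> key_equal S A B \<longrightarrow> A = B)"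

definition block :: "'r schema \<Rightarrow> ('r, 'c) fact set \<Rightarrow> ('r, 'c) fact \<Rightarrow> ('r, 'c) fact set" where
  "block S db A = {B \<in> db. key_equal S A B}"

definition consistent :: "'r schema \<Rightarrow> ('r, 'c) fact set \<Rightarrow> bool" where
  "consistent S r \<longleftrightarrow> (\<forall>A\<in>r. \<forall>B\<in>r. key_equal S A B \<longrightarrow> A = B)"

definition is_repair :: "'r schema \<Rightarrow> ('r, 'c) fact set \<Rightarrow> ('r, 'c) fact set \<Rightarrow> bool" where
  "is_repair S db r \<longleftrightarrow> r \<subseteq> db \<and> consistent S r \<and>
     (\<forall>r'. r \<subset> r' \<and> r' \<subseteq> db \<longrightarrow> \<not> consistent S r')"

definition atom_of :: "('r, 'v, 'c) atom set \<Rightarrow> ('r, 'c) fact \<Rightarrow> ('r, 'v, 'c) atom" where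
  "atom_of q A = (THE F. F \<in> q \<and> fst F = fst A)"

definition fd_closure :: "('v set \<times> 'v set) set \<Rightarrow> 'v set \<Rightarrow> 'v set" where
  "fd_closure K X = \<Inter> {Y. X \<subseteq> Y \<and> (\<forall>(L, R)\<in>K. L \<subseteq> Y \<longrightarrow> R \<subseteq> Y)}"

definition fd_entails :: "('v set \<times> 'v set) set \<Rightarrow> 'v set \<Rightarrow> 'v set \<Rightarrow> bool" where
  "fd_entails K X Y \<longleftrightarrow> Y \<subseteq> fd_closure K X"

definition Kfds :: "'r schema \<Rightarrow> ('r, 'v, 'c) atom set \<Rightarrow> ('v set \<times> 'v set) set" where
  "Kfds S p = (\<lambda>F. (key S F, vars F)) ` p"

definition cons_atoms :: "'r schema \<Rightarrow> ('r, 'v, 'c) atom set \<Rightarrow> ('r, 'v, 'c) atom set" where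
  "cons_atoms S q = {F \<in> q. rmode S (fst F) = ModeC}"

definition medge :: "'r schema \<Rightarrow> ('r, 'v, 'c) atom set \<Rightarrow> ('r, 'v, 'c) atom \<Rightarrow> ('r, 'v, 'c) atom \<Rightarrow> bool" where
  "medge S q F G \<longleftrightarrow> F \<in> q \<and> G \<in> q \<and> F \<noteq> G \<and>
     fd_entails (Kfds S (cons_atoms S q)) (vars F) (key S G)"

text \<open>An elementary cycle of the M-graph, given as the list of its (pairwise distinct)
  atoms in cyclic order; its edges are the consecutive pairs (last to first included).\<close>
definition cycle_edge :: "('r, 'v, 'c) atom list \<Rightarrow> ('r, 'v, 'c) atom \<Rightarrow> ('r, 'v, 'c) atom \<Rightarrow> bool" where
  "cycle_edge cyc F G \<longleftrightarrow>
     (\<exists>i < length cyc. F = cyc ! i \<and> G = cyc ! ((i + 1) mod length cyc))"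

definition elementary_cycle :: "'r schema \<Rightarrow> ('r, 'v, 'c) atom set \<Rightarrow> ('r, 'v, 'c) atom list \<Rightarrow> bool" where
  "elementary_cycle S q cyc \<longleftrightarrow> length cyc \<ge> 2 \<and> distinct cyc \<and> set cyc \<subseteq> q \<and>
     (\<forall>F G. cycle_edge cyc F G \<longrightarrow> medge S q F G)"

definition hook :: "'r schema \<Rightarrow> ('r, 'v, 'c) atom set \<Rightarrow> ('r, 'c) fact set \<Rightarrow> ('r, 'c) fact \<Rightarrow> ('r, 'c) fact \<Rightarrow> bool" where
  "hook S q db A B \<longleftrightarrow> A \<in> db \<and> B \<in> db \<and>
     (\<exists>(\<theta> :: 'v \<Rightarrow> 'c) F G. medge S q F G \<and> inst \<theta> ` q \<subseteq> db \<and> A = inst \<theta> F \<and>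
        key_equal S B (inst \<theta> G))"

definition hookC_vertices :: "('r, 'v, 'c) atom set \<Rightarrow> ('r, 'v, 'c) atom list \<Rightarrow> ('r, 'c) fact set \<Rightarrow> ('r, 'c) fact set" where
  "hookC_vertices q cyc db = {A \<in> db. atom_of q A \<in> set cyc}"

definition hookC :: "'r schema \<Rightarrow> ('r, 'v, 'c) atom set \<Rightarrow> ('r, 'v, 'c) atom list \<Rightarrow> ('r, 'c) fact set \<Rightarrow> ('r, 'c) fact \<Rightarrow> ('r, 'c) fact \<Rightarrow> bool" where
  "hookC S q cyc db A B \<longleftrightarrow> A \<in> hookC_vertices q cyc db \<and> B \<in> hookC_vertices q cyc db \<and>
     hook S q db A B \<and> cycle_edge cyc (atom_of q A) (atom_of q B)"

definition strong_component :: "'a set \<Rightarrow> ('a \<Rightarrow> 'a \<Rightarrow> bool) \<Rightarrow> 'a set \<Rightarrow> bool" where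
  "strong_component V E C \<longleftrightarrow> C \<noteq> {} \<and> C \<subseteq> V \<and>
     (\<forall>a\<in>C. \<forall>b\<in>C. E\<^sup>*\<^sup>* a b) \<and>
     (\<forall>a\<in>C. \<forall>b\<in>V. E\<^sup>*\<^sup>* a b \<and> E\<^sup>*\<^sup>* b a \<longrightarrow> b \<in> C)"

definition garbage_set :: "'r schema \<Rightarrow> ('r, 'v, 'c) atom set \<Rightarrow> ('r, 'v, 'c) atom set \<Rightarrow> ('r, 'c) fact set \<Rightarrow> ('r, 'c) fact set \<Rightarrow> bool" where
  "garbage_set S q q0 db gs \<longleftrightarrow> gs \<subseteq> db \<and>
     (\<forall>A\<in>gs. atom_of q A \<in> q0 \<and> block S db A \<subseteq> gs) \<and>
     (\<exists>r. is_repair S gs r \<and>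
        (\<forall>\<theta> :: 'v \<Rightarrow> 'c. inst \<theta> ` q \<subseteq> (db - gs) \<union> r \<longrightarrow> inst \<theta> ` q0 \<inter> r = {}))"

text \<open>The maximal garbage set: the union of all garbage sets (garbage sets are
  closed under union, so this is the largest one).\<close>
definition max_garbage :: "'r schema \<Rightarrow> ('r, 'v, 'c) atom set \<Rightarrow> ('r, 'v, 'c) atom set \<Rightarrow> ('r, 'c) fact set \<Rightarrow> ('r, 'c) fact set" where
  "max_garbage S q q0 db = \<Union> {gs. garbage_set S q q0 db gs}"

end

theory Submission
  imports Defs
begin

lemma map_tval_eq:
  "map (tval \<theta>) ts = map (tval \<theta>') ts \<longleftrightarrow> (\<forall>t\<in>set ts. \<forall>v\<in>tvars t. \<theta> v = \<theta>' v)"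
proof (induction ts)
  case Nil then show ?case by simp
next
  case (Cons a ts) then show ?case by (cases a) auto
qed

lemma tval_eq_iff:
  "tval \<theta> t = tval \<theta>' t \<longleftrightarrow> (\<forall>v\<in>tvars t. \<theta> v = \<theta>' v)"
  by (cases t) auto

lemma inst_eq_iff:
  "inst \<theta> H = inst \<theta>' H \<longleftrightarrow> (\<forall>v\<in>vars H. \<theta> v = \<theta>' v)"
  unfolding inst_def vars_def by (auto simp: map_tval_eq tval_eq_iff)

lemma key_equal_inst_iff:
  "key_equal S (inst \<theta> H) (inst \<theta>' H) \<longleftrightarrow> (\<forall>v\<in>key S H. \<theta> v = \<theta>' v)"
  unfolding key_equal_def inst_def key_def by (auto simp: take_map map_tval_eq tval_eq_iff)

lemma key_equal_sym: "key_equal S A B \<Longrightarrow> key_equal S B A"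
  unfolding key_equal_def by auto

lemma key_equal_trans: "key_equal S A B \<Longrightarrow> key_equal S B C \<Longrightarrow> key_equal S A C"
  unfolding key_equal_def by auto

lemma agree:
  assumes db: "is_database S q db"
    and t1: "inst \<theta> ` q \<subseteq> db" and t2: "inst \<theta>' ` q \<subseteq> db"
    and e: "medge S q F G" and eqF: "inst \<theta> F = inst \<theta>' F"
  shows "key_equal S (inst \<theta> G) (inst \<theta>' G)"
proof -
  define Y where "Y = {v. \<theta> v = \<theta>' v}"
  have FY: "vars F \<subseteq> Y" using eqF unfolding Y_def inst_eq_iff by auto
  have closed0: "vars H \<subseteq> Y" if H: "H \<in> q" "rmode S (fst H) = ModeC" "key S H \<subseteq> Y" for H
  proof -
    have "key_equal S (inst \<theta> H) (inst \<theta>' H)"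
      using H(3) unfolding key_equal_inst_iff Y_def by auto
    moreover have "inst \<theta> H \<in> db" "inst \<theta>' H \<in> db" using H t1 t2 by auto
    moreover have "rmode S (fst (inst \<theta> H)) = ModeC" using H by (simp add: inst_def)
    ultimately have "inst \<theta> H = inst \<theta>' H" using db unfolding is_database_def by blast
    then show "vars H \<subseteq> Y" unfolding inst_eq_iff Y_def by auto
  qed
  have closed: "\<forall>(L, R)\<in>Kfds S (cons_atoms S q). L \<subseteq> Y \<longrightarrow> R \<subseteq> Y"
    using closed0 by (auto simp: Kfds_def cons_atoms_def)
  have "fd_closure (Kfds S (cons_atoms S q)) (vars F) \<subseteq> Y"
    unfolding fd_closure_def using FY closed by (intro Inter_lower) simp
  moreover have "key S G \<subseteq> fd_closure (Kfds S (cons_atoms S q)) (vars F)"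
    using e unfolding medge_def fd_entails_def by auto
  ultimately show ?thesis unfolding key_equal_inst_iff Y_def by auto
qed

lemma atom_of_eq:
  assumes "sjf_query S q" "F \<in> q" "fst F = fst A"
  shows "atom_of q A = F"
  unfolding atom_of_def
proof (rule the_equality)
  show "F \<in> q \<and> fst F = fst A" using assms by simp
next
  fix G assume "G \<in> q \<and> fst G = fst A"
  then show "G = F" using assms unfolding sjf_query_def by metis
qed

lemma step:
  fixes q :: "('r, 'v, 'c) atom set"
  assumes sjf: "sjf_query S q" and db: "is_database S q db"
    and gs: "garbage_set S q (set cyc) db Og" and Bo: "B \<in> Og"
    and h: "hookC S q cyc db A B" and cq: "set cyc \<subseteq> q"
  shows "A \<in> max_garbage S q (set cyc) db"
proof (cases "A \<in> Og")
  case True then show ?thesis using gs unfolding max_garbage_def by blast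
next
  case False
  from h obtain \<theta> :: "'v \<Rightarrow> 'c" and F G where e: "medge S q F G" and tq: "inst \<theta> ` q \<subseteq> db"
    and AF: "A = inst \<theta> F" and BG: "key_equal S B (inst \<theta> G)"
    and Adb: "A \<in> db" and Bdb: "B \<in> db"
    and AC: "atom_of q A \<in> set cyc" and BC: "atom_of q B \<in> set cyc"
    unfolding hookC_def hook_def hookC_vertices_def by blast
  have Fq: "F \<in> q" and Gq: "G \<in> q" using e unfolding medge_def by auto
  have "atom_of q B = G" using atom_of_eq[OF sjf Gq] BG
    unfolding key_equal_def inst_def by simp
  with BC have Gc: "G \<in> set cyc" by simp
  have fA: "fst A = fst F" using AF by (simp add: inst_def)
  from gs have osub: "Og \<subseteq> db" and oat: "\<forall>X\<in>Og. atom_of q X \<in> set cyc \<and> block S db X \<subseteq> Og"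
    unfolding garbage_set_def by auto
  from gs obtain r where rep: "is_repair S Og r"
    and gr: "\<forall>\<theta>' :: 'v \<Rightarrow> 'c. inst \<theta>' ` q \<subseteq> (db - Og) \<union> r \<longrightarrow> inst \<theta>' ` set cyc \<inter> r = {}"
    unfolding garbage_set_def by blast
  have blockB: "block S db B \<subseteq> Og" using oat Bo by blast
  define Og' where "Og' = Og \<union> block S db A"
  define r' where "r' = insert A r"
  have disj: "block S db A \<inter> Og = {}"
  proof (rule ccontr)
    assume "block S db A \<inter> Og \<noteq> {}"
    then obtain X where X: "X \<in> Og" "key_equal S A X" unfolding block_def by auto
    then have "A \<in> block S db X" using Adb key_equal_sym[OF X(2)] unfolding block_def by auto
    with X oat False show False by blast
  qed
  have keyself: "key_equal S A A" unfolding key_equal_def by simp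
  have noF: "inst \<theta>' F \<noteq> A" if t': "inst \<theta>' ` q \<subseteq> (db - Og) \<union> r" for \<theta>' :: "'v \<Rightarrow> 'c"
  proof
    assume eq: "inst \<theta>' F = A"
    have rsub: "r \<subseteq> Og" using rep unfolding is_repair_def by auto
    have t'db: "inst \<theta>' ` q \<subseteq> db" using t' rsub osub by blast
    have "key_equal S (inst \<theta> G) (inst \<theta>' G)"
      using agree[OF db tq t'db e] eq AF by simp
    with BG have "key_equal S B (inst \<theta>' G)" by (rule key_equal_trans)
    moreover have "inst \<theta>' G \<in> db" using t'db Gq by auto
    ultimately have "inst \<theta>' G \<in> Og" using blockB unfolding block_def by auto
    then have "inst \<theta>' G \<in> r" using t' Gq by auto
    moreover have "inst \<theta>' ` set cyc \<inter> r = {}" using gr t' by blast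
    ultimately show False using Gc by auto
  qed
  have "garbage_set S q (set cyc) db Og'"
    unfolding garbage_set_def
  proof (intro conjI ballI exI[of _ r'])
    show "Og' \<subseteq> db" using osub unfolding Og'_def block_def by auto
  next
    fix X assume "X \<in> Og'"
    then have "X \<in> Og \<union> block S db A" unfolding Og'_def .
    then show "atom_of q X \<in> set cyc"
    proof
      assume "X \<in> Og" then show ?thesis using oat by blast
    next
      assume "X \<in> block S db A"
      then have "fst X = fst A" unfolding block_def key_equal_def by auto
      then have "atom_of q X = atom_of q A" unfolding atom_of_def by simp
      then show ?thesis using AC by simp
    qed
  next
    fix X assume "X \<in> Og'"
    then have "X \<in> Og \<union> block S db A" unfolding Og'_def .
    then show "block S db X \<subseteq> Og'"
    proof
      assume "X \<in> Og" then show ?thesis using oat unfolding Og'_def by blast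
    next
      assume "X \<in> block S db A"
      then show ?thesis unfolding Og'_def block_def using key_equal_trans by blast
    qed
  next
    show "is_repair S Og' r'"
      unfolding is_repair_def
    proof (intro conjI allI impI)
      have "r \<subseteq> Og" using rep unfolding is_repair_def by auto
      then show "r' \<subseteq> Og'" unfolding r'_def Og'_def block_def using Adb keyself by auto
    next
      have rsub: "r \<subseteq> Og" and rc: "consistent S r" using rep unfolding is_repair_def by auto
      show "consistent S r'" unfolding consistent_def r'_def
      proof (intro ballI impI)
        fix X Y assume X: "X \<in> insert A r" and Y: "Y \<in> insert A r" and k: "key_equal S X Y"
        show "X = Y"
        proof (cases "X = A")
          case True
          show ?thesis
          proof (rule ccontr)
            assume "X \<noteq> Y" then have "Y \<in> r" using Y True by auto
            then have "Y \<in> block S db A \<inter> Og" using rsub osub k True unfolding block_def by auto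
            with disj show False by auto
          qed
        next
          case XA: False
          show ?thesis
          proof (cases "Y = A")
            case True
            have "X \<in> r" using X XA by auto
            then have "X \<in> block S db A \<inter> Og" using rsub osub k True key_equal_sym unfolding block_def by blast
            with disj show ?thesis by auto
          next
            case False then show ?thesis using X Y XA k rc unfolding consistent_def by auto
          qed
        qed
      qed
    next
      fix r'' assume a: "r' \<subset> r'' \<and> r'' \<subseteq> Og'"
      show "\<not> consistent S r''"
      proof
        assume c: "consistent S r''"
        from a obtain X where X: "X \<in> r''" "X \<notin> r'" by auto
        show False
        proof (cases "X \<in> Og")
          case True
          have "r \<subset> r'' \<inter> Og" using a X True rep unfolding r'_def is_repair_def by auto
          moreover have "consistent S (r'' \<inter> Og)" using c unfolding consistent_def by auto
          ultimately show False using rep unfolding is_repair_def by blast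
        next
          case False
          then have "key_equal S A X" using a X unfolding Og'_def block_def by auto
          moreover have "A \<in> r''" using a unfolding r'_def by auto
          ultimately have "A = X" using c X unfolding consistent_def by blast
          with X show False unfolding r'_def by auto
        qed
      qed
    qed
  next
    show "\<forall>\<theta>' :: 'v \<Rightarrow> 'c. inst \<theta>' ` q \<subseteq> (db - Og') \<union> r' \<longrightarrow> inst \<theta>' ` set cyc \<inter> r' = {}"
    proof (intro allI impI)
      fix \<theta>' :: "'v \<Rightarrow> 'c"
      assume t: "inst \<theta>' ` q \<subseteq> (db - Og') \<union> r'"
      have t': "inst \<theta>' ` q \<subseteq> (db - Og) \<union> r"
        using t False Adb unfolding Og'_def r'_def by auto
      have "inst \<theta>' ` set cyc \<inter> r = {}" using gr t' by blast
      moreover have "A \<notin> inst \<theta>' ` set cyc"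
      proof
        assume "A \<in> inst \<theta>' ` set cyc"
        then obtain H where H: "H \<in> set cyc" "inst \<theta>' H = A" by auto
        have Hq: "H \<in> q" using H(1) cq by auto
        have "fst H = fst F" using H(2) fA by (auto simp: inst_def)
        then have "H = F" using Hq Fq sjf unfolding sjf_query_def by blast
        then show False using noF[OF t'] H(2) by simp
      qed
      ultimately show "inst \<theta>' ` set cyc \<inter> r' = {}" unfolding r'_def by auto
    qed
  qed
  moreover have "A \<in> Og'" using Adb keyself unfolding Og'_def block_def by auto
  ultimately show ?thesis unfolding max_garbage_def by blast
qed

theorem corollary20:
  fixes S :: "'r schema" and q :: "('r, 'v, 'c) atom set"
    and cyc :: "('r, 'v, 'c) atom list" and db :: "('r, 'c) fact set"
    and SC :: "('r, 'c) fact set"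
  assumes "wf_schema S"
    and "sjf_query S q"
    and "elementary_cycle S q cyc"
    and "is_database S q db"
    and "strong_component (hookC_vertices q cyc db) (hookC S q cyc db) SC"
    and "\<exists>A\<in>SC. A \<in> max_garbage S q (set cyc) db"
  shows "\<forall>A\<in>SC. A \<in> max_garbage S q (set cyc) db"
proof
  fix X assume X: "X \<in> SC"
  from assms(6) obtain A where A: "A \<in> SC" "A \<in> max_garbage S q (set cyc) db" by blast
  have cq: "set cyc \<subseteq> q" using assms(3) unfolding elementary_cycle_def by auto
  have "(hookC S q cyc db)\<^sup>*\<^sup>* X A" using assms(5) X A(1) unfolding strong_component_def by blast
  then show "X \<in> max_garbage S q (set cyc) db"
  proof (induction rule: converse_rtranclp_induct)
    case base then show ?case using A(2) by simp
  next
    case (step y z)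
    then obtain Og where "garbage_set S q (set cyc) db Og" "z \<in> Og" unfolding max_garbage_def by blast
    then show ?case using Submission.step[OF assms(2) assms(4)] step(1) cq by blast
  qed
qed

end
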